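(* Let $G=(V,E)$ be a tree with boundary with degree sequence $\pi$. Let $(v_1,u_1),(v_2,u_2)\in E$ be edges such that $u_2$ lies on the geodesic path from $v_1$ to $v_2$ but $u_1$ does not. Let $G'=(V,E')$ be obtained by replacing the edges $(v_1,u_1)$ and $(v_2,u_2)$ by the edges $(v_1,v_2)$ and $(u_1,u_2)$. Then $G'$ is a tree with boundary with degree sequence $\pi$ and the same set of boundary vertices as $G$. Moreover, for every function $f:V\to\mathbb{R}$ with $f|_{\partial V}=0$ and $f\not\equiv 0$ satisfying $f(v_1)\ge f(u_2)$ and $f(v_2)\ge f(u_1)$, we have $\mathcal{R}_{G'}(f)\le\mathcal{R}_G(f)$, with strict inequality if both $f(v_1)>f(u_2)$ and $f(v_2)>f(u_1)$.
   Context: A tree with boundary is a finite tree $G=(V,E)$ whose vertex set is partitioned into the set $\partial V$ of boundary vertices, which are exactly the vertices of degree $1$, and the set $V_0$ of interior vertices, which are exactly the vertices of degree at least $2$; both sets are nonempty. Its degree sequence is the multiset of vertex degrees. For a graph $H$ on vertex set $V$ with edge set $E_H$, the Rayleigh quotient of $f:V\to\mathbb{R}$, $f\not\equiv0$, is $\mathcal{R}_H(f)=\sum_{(u,v)\in E_H}(f(u)-f(v))^2\big/\sum_{v\in V}f(v)^2$. *)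

theory Defs
  imports Complex_Main "HOL-Library.Multiset"
begin

definition graph_on :: "'a set \<Rightarrow> 'a set set \<Rightarrow> bool" where
  "graph_on V E \<longleftrightarrow> finite V \<and> (\<forall>e\<in>E. \<exists>u v. e = {u, v} \<and> u \<noteq> v \<and> u \<in> V \<and> v \<in> V)"

definition simple_path :: "'a set \<Rightarrow> 'a set set \<Rightarrow> 'a list \<Rightarrow> 'a \<Rightarrow> 'a \<Rightarrow> bool" where
  "simple_path V E p u v \<longleftrightarrow> p \<noteq> [] \<and> hd p = u \<and> last p = v \<and> distinct p \<and> set p \<subseteq> V \<and>
     (\<forall>i. Suc i < length p \<longrightarrow> {p ! i, p ! Suc i} \<in> E)"

definition is_tree :: "'a set \<Rightarrow> 'a set set \<Rightarrow> bool" where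
  "is_tree V E \<longleftrightarrow> graph_on V E \<and> V \<noteq> {} \<and>
     (\<forall>u\<in>V. \<forall>v\<in>V. \<exists>!p. simple_path V E p u v)"

definition geodesic :: "'a set \<Rightarrow> 'a set set \<Rightarrow> 'a \<Rightarrow> 'a \<Rightarrow> 'a list" where
  "geodesic V E u v = (THE p. simple_path V E p u v)"

definition deg :: "'a set set \<Rightarrow> 'a \<Rightarrow> nat" where
  "deg E v = card {e \<in> E. v \<in> e}"

definition boundary :: "'a set \<Rightarrow> 'a set set \<Rightarrow> 'a set" where
  "boundary V E = {v \<in> V. deg E v = 1}"

definition interior :: "'a set \<Rightarrow> 'a set set \<Rightarrow> 'a set" where
  "interior V E = {v \<in> V. deg E v \<ge> 2}"

definition tree_with_boundary :: "'a set \<Rightarrow> 'a set set \<Rightarrow> bool" where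
  "tree_with_boundary V E \<longleftrightarrow> is_tree V E \<and> V = boundary V E \<union> interior V E \<and>
     boundary V E \<noteq> {} \<and> interior V E \<noteq> {}"

definition degree_sequence :: "'a set \<Rightarrow> 'a set set \<Rightarrow> nat multiset" where
  "degree_sequence V E = image_mset (deg E) (mset_set V)"

definition edge_sq :: "('a \<Rightarrow> real) \<Rightarrow> 'a set \<Rightarrow> real" where
  "edge_sq f e = (THE d. \<exists>u v. e = {u, v} \<and> d = (f u - f v)^2)"

definition rayleigh :: "'a set \<Rightarrow> 'a set set \<Rightarrow> ('a \<Rightarrow> real) \<Rightarrow> real" where
  "rayleigh V E f = (\<Sum>e\<in>E. edge_sq f e) / (\<Sum>v\<in>V. (f v)^2)"

end

theory Submission
  imports Defs
begin

definition adj :: "'a set set \<Rightarrow> ('a \<times> 'a) set" where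
  "adj F = {(x,y). {x,y} \<in> F}"

abbreviation conn :: "'a set set \<Rightarrow> 'a \<Rightarrow> 'a \<Rightarrow> bool" where
  "conn F x y \<equiv> (x,y) \<in> (adj F)\<^sup>*"

definition bridges :: "'a set set \<Rightarrow> bool" where
  "bridges F \<longleftrightarrow> (\<forall>x y. {x,y} \<in> F \<longrightarrow> \<not> conn (F - {{x,y}}) x y)"

lemma adj_iff[simp]: "(x,y) \<in> adj F \<longleftrightarrow> {x,y} \<in> F"
  by (simp add: adj_def)

lemma conn_sym: assumes "conn F x y" shows "conn F y x"
proof -
  have "(y,x) \<in> ((adj F)\<inverse>)\<^sup>*" using assms by (simp add: rtrancl_converseI)
  moreover have "(adj F)\<inverse> = adj F" by (auto simp: adj_def insert_commute)
  ultimately show ?thesis by simp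
qed

lemma conn_trans: "conn F x y \<Longrightarrow> conn F y z \<Longrightarrow> conn F x z"
  by (rule rtrancl_trans)

lemma conn_edge: "{x,y} \<in> F \<Longrightarrow> conn F x y"
  by (rule r_into_rtrancl) simp

lemma conn_mono: assumes "F \<subseteq> G" "conn F x y" shows "conn G x y"
proof -
  have "adj F \<subseteq> adj G" using assms(1) by (auto simp: adj_def)
  then show ?thesis using assms(2) rtrancl_mono by blast
qed

lemma conn_split:
  assumes "conn F x z"
  shows "conn (F - {{a,b}}) x z \<or> conn (F - {{a,b}}) a z \<or> conn (F - {{a,b}}) b z"
  using assms
proof (induction rule: rtrancl_induct)
  case base then show ?case by simp
next
  case (step y z)
  show ?case
  proof (cases "{y,z} = {a,b}")
    case True
    then have "z = a \<or> z = b" by (auto simp: doubleton_eq_iff)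
    then show ?thesis by auto
  next
    case False
    then have "(y,z) \<in> adj (F - {{a,b}})" using step(2) by simp
    then show ?thesis using step(3) by (meson rtrancl.rtrancl_into_rtrancl)
  qed
qed

lemma conn_add:
  assumes "conn (G \<union> {{c,d}}) x y"
  shows "conn G x y \<or> (conn G x c \<and> conn G d y) \<or> (conn G x d \<and> conn G c y)"
  using assms
proof (induction rule: rtrancl_induct)
  case base then show ?case by simp
next
  case (step y z)
  show ?case
  proof (cases "{y,z} \<in> G")
    case True
    then have e: "conn G y z" by (rule conn_edge)
    from step(3) show ?thesis using e conn_trans by metis
  next
    case False
    then have "{y,z} = {c,d}" using step(2) by simp
    then have "(y = c \<and> z = d) \<or> (y = d \<and> z = c)" by (auto simp: doubleton_eq_iff)
    then show ?thesis using step(3) conn_sym conn_trans rtrancl_refl by metis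
  qed
qed

lemma walk_conn: "(\<forall>i<j. {p!i, p!Suc i} \<in> F) \<Longrightarrow> conn F (p!0) (p!j)"
  by (induction j) (auto intro: rtrancl_into_rtrancl)

lemma path_conn: assumes "simple_path V F p a b" shows "conn F a b"
proof -
  have p: "p \<noteq> []" "hd p = a" "last p = b" "\<forall>i. Suc i < length p \<longrightarrow> {p ! i, p ! Suc i} \<in> F"
    using assms by (auto simp: simple_path_def)
  have "\<forall>i<length p - 1. {p!i, p!Suc i} \<in> F" using p(4) by auto
  then have "conn F (p!0) (p!(length p - 1))" by (rule walk_conn)
  then show ?thesis using p by (simp add: hd_conv_nth last_conv_nth)
qed

lemma graph_onD: "graph_on V F \<Longrightarrow> {x,y} \<in> F \<Longrightarrow> x \<in> V \<and> y \<in> V \<and> x \<noteq> y"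
  unfolding graph_on_def by (fastforce simp: doubleton_eq_iff)

lemma conn_path:
  assumes g: "graph_on V F" and b: "b \<in> V" and c: "conn F a b"
  shows "\<exists>p. simple_path V F p a b"
  using c
proof (induction rule: converse_rtrancl_induct)
  case base
  show ?case by (rule exI[of _ "[b]"]) (simp add: simple_path_def b)
next
  case (step a z)
  from step(3) obtain p where p: "simple_path V F p z b" by blast
  have pp: "p \<noteq> []" "hd p = z" "last p = b" "distinct p" "set p \<subseteq> V"
    "\<forall>i. Suc i < length p \<longrightarrow> {p ! i, p ! Suc i} \<in> F"
    using p by (auto simp: simple_path_def)
  have az: "{a,z} \<in> F" using step(1) by simp
  have aV: "a \<in> V" using graph_onD[OF g az] by simp
  show ?case
  proof (cases "a \<in> set p")
    case True
    then obtain k where k: "k < length p" "p ! k = a" by (auto simp: in_set_conv_nth)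
    have "simple_path V F (drop k p) a b"
      unfolding simple_path_def
    proof (intro conjI allI impI)
      show "drop k p \<noteq> []" using k by simp
      show "hd (drop k p) = a" using k by (simp add: hd_drop_conv_nth)
      show "last (drop k p) = b" using k pp by simp
      show "distinct (drop k p)" using pp by simp
      show "set (drop k p) \<subseteq> V" using pp set_drop_subset by fastforce
      fix i assume "Suc i < length (drop k p)"
      then have "Suc (k + i) < length p" by simp
      then have "{p ! (k+i), p ! Suc (k+i)} \<in> F" using pp by blast
      then show "{drop k p ! i, drop k p ! Suc i} \<in> F" using k by simp
    qed
    then show ?thesis by blast
  next
    case False
    have "simple_path V F (a # p) a b"
      unfolding simple_path_def
    proof (intro conjI allI impI)
      show "a # p \<noteq> []" by simp
      show "hd (a # p) = a" by simp
      show "last (a # p) = b" using pp by simp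
      show "distinct (a # p)" using pp False by simp
      show "set (a # p) \<subseteq> V" using pp aV by simp
      fix i assume i: "Suc i < length (a # p)"
      show "{(a # p) ! i, (a # p) ! Suc i} \<in> F"
      proof (cases i)
        case 0
        then show ?thesis using az pp by (simp add: hd_conv_nth)
      next
        case (Suc j)
        then show ?thesis using i pp by simp
      qed
    qed
    then show ?thesis by blast
  qed
qed

lemma path_loop: assumes "simple_path V F p a a" shows "p = [a]"
proof -
  have p: "p \<noteq> []" "hd p = a" "last p = a" "distinct p" using assms by (auto simp: simple_path_def)
  have "length p = 1"
  proof (rule ccontr)
    assume "length p \<noteq> 1"
    then have l: "length p \<ge> 2" using p(1) by (cases p) (auto simp: Suc_le_eq)
    have "p ! 0 = p ! (length p - 1)" using p by (simp add: hd_conv_nth last_conv_nth)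
    then have "0 = length p - 1" using nth_eq_iff_index_eq[OF p(4), of 0 "length p - 1"] l p(1) by auto
    then show False using l by simp
  qed
  then show ?thesis using p by (cases p) auto
qed

lemma path_tail:
  assumes "simple_path V F (x # p) a b" "p \<noteq> []"
  shows "simple_path V F p (hd p) b \<and> {x, hd p} \<in> F \<and> x \<notin> set p \<and> x = a"
proof -
  have q: "hd (x#p) = a" "last (x#p) = b" "distinct (x#p)" "set (x#p) \<subseteq> V"
    "\<forall>i. Suc i < length (x#p) \<longrightarrow> {(x#p) ! i, (x#p) ! Suc i} \<in> F"
    using assms(1) by (auto simp: simple_path_def)
  have e0: "{x, hd p} \<in> F" using q(5)[rule_format, of 0] assms(2) by (simp add: hd_conv_nth)
  have "\<forall>i. Suc i < length p \<longrightarrow> {p ! i, p ! Suc i} \<in> F"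
  proof (intro allI impI)
    fix i assume "Suc i < length p"
    then show "{p ! i, p ! Suc i} \<in> F" using q(5)[rule_format, of "Suc i"] by simp
  qed
  then show ?thesis using q assms(2) e0 by (auto simp: simple_path_def)
qed

lemma path_avoid:
  assumes "simple_path V F p a b" "w \<notin> set p" "w \<in> e"
  shows "simple_path V (F - {e}) p a b"
  using assms unfolding simple_path_def
  by (metis DiffI Suc_lessD insertCI insertE nth_mem singletonD)

lemma path_unique:
  assumes br: "bridges F"
  shows "simple_path V F p a b \<Longrightarrow> simple_path V F q a b \<Longrightarrow> p = q"
proof (induction p arbitrary: a q)
  case Nil then show ?case by (simp add: simple_path_def)
next
  case (Cons x p)
  have xa: "x = a" using Cons.prems(1) by (simp add: simple_path_def)
  obtain y q' where q: "q = y # q'" using Cons.prems(2) by (cases q) (auto simp: simple_path_def)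
  have ya: "y = a" using Cons.prems(2) q by (simp add: simple_path_def)
  show ?case
  proof (cases "p = []")
    case True
    then have "b = a" using Cons.prems(1) xa by (simp add: simple_path_def)
    then have "q = [a]" using path_loop Cons.prems(2) by metis
    then show ?thesis using True xa by simp
  next
    case False
    have q'ne: "q' \<noteq> []"
    proof
      assume "q' = []"
      then have "b = a" using Cons.prems(2) q ya by (simp add: simple_path_def)
      then have "x # p = [a]" using path_loop Cons.prems(1) by metis
      then show False using False by simp
    qed
    from path_tail[OF Cons.prems(1) False]
    have P: "simple_path V F p (hd p) b" "{x, hd p} \<in> F" "x \<notin> set p" by auto
    from path_tail[of V F y q' a b] Cons.prems(2) q q'ne
    have Q: "simple_path V F q' (hd q') b" "{y, hd q'} \<in> F" "y \<notin> set q'" by auto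
    show ?thesis
    proof (cases "hd p = hd q'")
      case True
      then have "p = q'" using Cons.IH[OF P(1)] Q(1) by simp
      then show ?thesis using q xa ya by simp
    next
      case False
      let ?e = "{a, hd p}"
      have "simple_path V (F - {?e}) p (hd p) b"
        using path_avoid[where w=a, OF P(1)] P(3) xa by auto
      then have c1: "conn (F - {?e}) (hd p) b" by (rule path_conn)
      have "simple_path V (F - {?e}) q' (hd q') b"
        using path_avoid[where w=a, OF Q(1)] Q(3) ya by auto
      then have c2: "conn (F - {?e}) (hd q') b" by (rule path_conn)
      have "{a, hd q'} \<in> F - {?e}" using Q(2) ya False by (auto simp: doubleton_eq_iff)
      then have c3: "conn (F - {?e}) a (hd q')" by (rule conn_edge)
      have "conn (F - {?e}) a (hd p)" using c3 c2 c1 conn_sym conn_trans by metis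
      moreover have "?e \<in> F" using P(2) xa by simp
      ultimately show ?thesis using br unfolding bridges_def by blast
    qed
  qed
qed

lemma tree_iff:
  "is_tree V F \<longleftrightarrow> graph_on V F \<and> V \<noteq> {} \<and> (\<forall>x\<in>V. \<forall>y\<in>V. conn F x y) \<and> bridges F"
proof
  assume T: "is_tree V F"
  have g: "graph_on V F" and ne: "V \<noteq> {}" and u: "\<forall>x\<in>V. \<forall>y\<in>V. \<exists>!p. simple_path V F p x y"
    using T by (auto simp: is_tree_def)
  have "\<forall>x\<in>V. \<forall>y\<in>V. conn F x y"
  proof (intro ballI)
    fix x y assume "x \<in> V" "y \<in> V"
    then obtain p where "simple_path V F p x y" using u by blast
    then show "conn F x y" by (rule path_conn)
  qed
  moreover have "bridges F"
    unfolding bridges_def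
  proof (intro allI impI notI)
    fix x y assume e: "{x,y} \<in> F" and cxy: "conn (F - {{x,y}}) x y"
    have xy: "x \<in> V" "y \<in> V" "x \<noteq> y" using graph_onD[OF g e] by auto
    have g': "graph_on V (F - {{x,y}})" using g by (auto simp: graph_on_def)
    obtain p where p: "simple_path V (F - {{x,y}}) p x y" using conn_path[OF g' xy(2) cxy] by blast
    have p': "simple_path V F p x y" using p by (auto simp: simple_path_def)
    have "simple_path V F [x,y] x y" using e xy by (auto simp: simple_path_def less_Suc_eq)
    then have "p = [x,y]" using u p' xy by blast
    moreover have "Suc 0 < length p \<longrightarrow> {p!0, p!Suc 0} \<in> F - {{x,y}}"
      using p unfolding simple_path_def by blast
    ultimately show False by simp
  qed
  ultimately show "graph_on V F \<and> V \<noteq> {} \<and> (\<forall>x\<in>V. \<forall>y\<in>V. conn F x y) \<and> bridges F"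
    using g ne by blast
next
  assume H: "graph_on V F \<and> V \<noteq> {} \<and> (\<forall>x\<in>V. \<forall>y\<in>V. conn F x y) \<and> bridges F"
  show "is_tree V F" unfolding is_tree_def
  proof (intro conjI ballI)
    show "graph_on V F" "V \<noteq> {}" using H by auto
    fix x y assume xy: "x \<in> V" "y \<in> V"
    obtain p where p: "simple_path V F p x y" using conn_path[of V F y x] H xy by blast
    show "\<exists>!p. simple_path V F p x y"
    proof (rule ex1I[of _ p])
      show "simple_path V F p x y" by (rule p)
      fix q assume q: "simple_path V F q x y"
      show "q = p" using path_unique[of F V q x y p] q p H by blast
    qed
  qed
qed


lemma swap_tree:
  assumes T: "is_tree V E" and e: "{a,b} \<in> E" and cV: "c \<in> V" and dV: "d \<in> V"
    and nc: "\<not> conn (E - {{a,b}}) c d"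
  shows "is_tree V (E - {{a,b}} \<union> {{c,d}})"
proof -
  let ?G = "E - {{a,b}}"
  let ?F = "?G \<union> {{c,d}}"
  from T have g: "graph_on V E" and ne: "V \<noteq> {}" and con: "\<forall>x\<in>V. \<forall>y\<in>V. conn E x y"
    and br: "bridges E" using T unfolding tree_iff by blast+
  have cd: "c \<noteq> d" using nc rtrancl.rtrancl_refl by metis
  have aV: "a \<in> V" "b \<in> V" using graph_onD[OF g e] by auto
  have gF: "graph_on V ?F" using g cV dV cd unfolding graph_on_def by blast
  have GF: "?G \<subseteq> ?F" by auto
  have cdF: "{c,d} \<in> ?F" by simp
  have split: "conn ?G a z \<or> conn ?G b z" if "z \<in> V" for z
    using conn_split[OF con[rule_format, OF aV(1) that], of a b] by auto
  have ab: "conn ?F a b"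
  proof -
    have "(conn ?G a c \<and> conn ?G b d) \<or> (conn ?G b c \<and> conn ?G a d)"
    proof -
      have "\<not> (conn ?G a c \<and> conn ?G a d)"
      proof
        assume h: "conn ?G a c \<and> conn ?G a d"
        have "conn ?G c d" using conn_trans[OF conn_sym[OF conjunct1[OF h]] conjunct2[OF h]] .
        then show False using nc by simp
      qed
      moreover have "\<not> (conn ?G b c \<and> conn ?G b d)"
      proof
        assume h: "conn ?G b c \<and> conn ?G b d"
        have "conn ?G c d" using conn_trans[OF conn_sym[OF conjunct1[OF h]] conjunct2[OF h]] .
        then show False using nc by simp
      qed
      ultimately show ?thesis using split[OF cV] split[OF dV] by blast
    qed
    then show ?thesis
    proof
      assume h: "conn ?G a c \<and> conn ?G b d"
      have 1: "conn ?F a c" "conn ?F b d" using h conn_mono[OF GF] by blast+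
      have 2: "conn ?F c d" using conn_edge[OF cdF] .
      show ?thesis using conn_trans[OF conn_trans[OF 1(1) 2] conn_sym[OF 1(2)]] .
    next
      assume h: "conn ?G b c \<and> conn ?G a d"
      have 1: "conn ?F b c" "conn ?F a d" using h conn_mono[OF GF] by blast+
      have 2: "conn ?F c d" using conn_edge[OF cdF] .
      show ?thesis using conn_trans[OF conn_trans[OF 1(2) conn_sym[OF 2]] conn_sym[OF 1(1)]] .
    qed
  qed
  have az: "conn ?F a z" if "z \<in> V" for z
  proof -
    from split[OF that] show ?thesis
    proof
      assume "conn ?G a z" then show ?thesis using conn_mono[OF GF] by blast
    next
      assume "conn ?G b z" then have "conn ?F b z" using conn_mono[OF GF] by blast
      then show ?thesis using conn_trans[OF ab] by blast
    qed
  qed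
  have conF: "\<forall>x\<in>V. \<forall>y\<in>V. conn ?F x y"
  proof (intro ballI)
    fix x y assume "x \<in> V" "y \<in> V"
    then have 1: "conn ?F a x" "conn ?F a y" using az by auto
    show "conn ?F x y" using conn_trans[OF conn_sym[OF 1(1)] 1(2)] .
  qed
  have brF: "bridges ?F"
    unfolding bridges_def
  proof (intro allI impI notI)
    fix x y assume f: "{x,y} \<in> ?F" and cxy: "conn (?F - {{x,y}}) x y"
    show False
    proof (cases "{x,y} = {c,d}")
      case True
      have s: "?F - {{x,y}} \<subseteq> ?G" using True by auto
      have "conn ?G x y" by (rule conn_mono[OF s cxy])
      then have "conn ?G c d" using True conn_sym by (auto simp: doubleton_eq_iff)
      then show False using nc by simp
    next
      case False
      have fE: "{x,y} \<in> E" "{x,y} \<noteq> {a,b}" using f False by auto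
      let ?H = "E - {{a,b}} - {{x,y}}"
      have "?F - {{x,y}} = ?H \<union> {{c,d}}" using False by auto
      then have c': "conn (?H \<union> {{c,d}}) x y" using cxy by simp
      have H1: "?H \<subseteq> E - {{x,y}}" by auto
      have H2: "?H \<subseteq> ?G" by auto
      have "{x,y} \<in> ?G" using fE by simp
      then have xyG: "conn ?G x y" by (rule conn_edge)
      have nxy: "\<not> conn (E - {{x,y}}) x y" using br fE(1) unfolding bridges_def by blast
      from conn_add[OF c'] show False
      proof (elim disjE conjE)
        assume "conn ?H x y" then show False using nxy conn_mono[OF H1] by blast
      next
        assume h: "conn ?H x c" "conn ?H d y"
        have 1: "conn ?G x c" "conn ?G d y" using h conn_mono[OF H2] by blast+
        have "conn ?G c d" using conn_trans[OF conn_trans[OF conn_sym[OF 1(1)] xyG] conn_sym[OF 1(2)]] .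
        then show False using nc by simp
      next
        assume h: "conn ?H x d" "conn ?H c y"
        have 1: "conn ?G x d" "conn ?G c y" using h conn_mono[OF H2] by blast+
        have "conn ?G d c" using conn_trans[OF conn_trans[OF conn_sym[OF 1(1)] xyG] conn_sym[OF 1(2)]] .
        then have "conn ?G c d" by (rule conn_sym)
        then show False using nc by simp
      qed
    qed
  qed
  show ?thesis unfolding tree_iff using gF ne conF brF by blast
qed

lemma card_swap: shows "finite S \<Longrightarrow> x \<in> S \<Longrightarrow> y \<notin> S \<Longrightarrow> card (S - {x} \<union> {y}) = card S"
proof -
  assume a: "finite S" "x \<in> S" "y \<notin> S"
  then have "card S > 0" using card_gt_0_iff by blast
  then show ?thesis using a by simp
qed

lemma edge_sq_eq: "edge_sq f {x,y} = (f x - f y)^2"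
  unfolding edge_sq_def
proof (rule the_equality)
  show "\<exists>u v. {x, y} = {u, v} \<and> (f x - f y)\<^sup>2 = (f u - f v)\<^sup>2" by blast
  fix d assume "\<exists>u v. {x, y} = {u, v} \<and> d = (f u - f v)\<^sup>2"
  then show "d = (f x - f y)\<^sup>2" by (auto simp: doubleton_eq_iff power2_commute)
qed


lemma degset:
  assumes "z \<notin> Q" "z \<notin> S" "z \<in> P" "z \<in> R"
  shows "{e \<in> (E - {P,Q}) \<union> {R,S}. z \<in> e} = {e \<in> E. z \<in> e} - {P} \<union> {R}"
  using assms by auto

theorem lemma3:
  fixes V :: "'a set" and E :: "'a set set" and v1 u1 v2 u2 :: 'a
  assumes G: "tree_with_boundary V E"
    and e1: "{v1, u1} \<in> E" and e2: "{v2, u2} \<in> E"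
    and on_path: "u2 \<in> set (geodesic V E v1 v2)"
    and not_on_path: "u1 \<notin> set (geodesic V E v1 v2)"
  defines "E' \<equiv> (E - {{v1, u1}, {v2, u2}}) \<union> {{v1, v2}, {u1, u2}}"
  shows "tree_with_boundary V E' \<and> degree_sequence V E' = degree_sequence V E \<and>
         boundary V E' = boundary V E \<and>
         (\<forall>f :: 'a \<Rightarrow> real.
            (\<forall>v\<in>boundary V E. f v = 0) \<and> (\<exists>v\<in>V. f v \<noteq> 0) \<and>
            f v1 \<ge> f u2 \<and> f v2 \<ge> f u1 \<longrightarrow>
              rayleigh V E' f \<le> rayleigh V E f \<and>
              (f v1 > f u2 \<and> f v2 > f u1 \<longrightarrow> rayleigh V E' f < rayleigh V E f))"
proof -
  have T: "is_tree V E" using G by (simp add: tree_with_boundary_def)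
  have g: "graph_on V E" and br: "bridges E" using T unfolding tree_iff by blast+
  have uniq: "\<forall>x\<in>V. \<forall>y\<in>V. \<exists>!p. simple_path V E p x y" using T by (simp add: is_tree_def)
  have V1: "v1 \<in> V" "u1 \<in> V" "v1 \<noteq> u1" using graph_onD[OF g e1] by auto
  have V2: "v2 \<in> V" "u2 \<in> V" "v2 \<noteq> u2" using graph_onD[OF g e2] by auto
  define p where "p = geodesic V E v1 v2"
  have ex1: "\<exists>!p. simple_path V E p v1 v2" using uniq V1 V2 by blast
  have p: "simple_path V E p v1 v2" unfolding p_def geodesic_def by (rule theI'[OF ex1])
  have pu2: "u2 \<in> set p" and pu1: "u1 \<notin> set p" using on_path not_on_path p_def by auto
  have pp: "p \<noteq> []" "hd p = v1" "last p = v2" "distinct p"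
    "\<forall>i. Suc i < length p \<longrightarrow> {p ! i, p ! Suc i} \<in> E"
    using p by (auto simp: simple_path_def)
  have v1v2: "v1 \<noteq> v2"
  proof
    assume "v1 = v2"
    then have "p = [v1]" using p path_loop by metis
    then show False using pu2 V2(3) \<open>v1 = v2\<close> by simp
  qed
  have v2p: "v2 \<in> set p" using pp by auto
  have u1v2: "u1 \<noteq> v2" using v2p pu1 by auto
  have u1u2: "u1 \<noteq> u2" using pu2 pu1 by auto
  show ?thesis
  proof (cases "u2 = v1")
    case True
    have "E' = E" unfolding E'_def using True e1 e2 by (auto simp: insert_commute)
    then show ?thesis using G True by auto
  next
    case False
    obtain k where k: "k < length p" "p ! k = u2" using pu2 by (auto simp: in_set_conv_nth)
    define n where "n = length p - 1"
    have n: "n < length p" "p ! n = v2" "p ! 0 = v1" using pp by (auto simp: n_def last_conv_nth hd_conv_nth)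
    have kn: "k < n"
    proof -
      have "k \<noteq> n" using k n V2(3) by auto
      then show ?thesis using k n_def by auto
    qed
    have c1: "conn (E - {{v1,u1}}) v1 v2"
    proof -
      have "\<forall>i<n. {p!i, p!Suc i} \<in> E - {{v1,u1}}"
      proof (intro allI impI)
        fix i assume i: "i < n"
        have "{p!i, p!Suc i} \<in> E" using pp(5) i n_def by auto
        moreover have "u1 \<notin> {p!i, p!Suc i}"
        proof -
          have "i < length p" "Suc i < length p" using i n_def by auto
          then have "p!i \<in> set p" "p!Suc i \<in> set p" by (simp_all only: nth_mem)
          then show ?thesis using pu1 by auto
        qed
        ultimately show "{p!i, p!Suc i} \<in> E - {{v1,u1}}" by auto
      qed
      from walk_conn[OF this] show ?thesis using n by simp
    qed
    have c2: "conn (E - {{v1,u1}} - {{v2,u2}}) v1 u2"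
    proof -
      have "\<forall>i<k. {p!i, p!Suc i} \<in> E - {{v1,u1}} - {{v2,u2}}"
      proof (intro allI impI)
        fix i assume i: "i < k"
        have "{p!i, p!Suc i} \<in> E" using pp(5) i kn n_def by auto
        moreover have "u1 \<notin> {p!i, p!Suc i}"
        proof -
          have "i < length p" "Suc i < length p" using i k by auto
          then have "p!i \<in> set p" "p!Suc i \<in> set p" by (simp_all only: nth_mem)
          then show ?thesis using pu1 by auto
        qed
        moreover have "p!i \<noteq> v2" using nth_eq_iff_index_eq[OF pp(4), of i n] i kn n by auto
        moreover have "p!Suc i \<noteq> v2"
        proof -
          have si: "Suc i < length p" "Suc i \<noteq> n" using i kn n(1) by auto
          show ?thesis using nth_eq_iff_index_eq[OF pp(4) si(1) n(1)] n(2) si(2) by simp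
        qed
        ultimately have A: "{p!i, p!Suc i} \<in> E" "u1 \<notin> {p!i, p!Suc i}" "v2 \<notin> {p!i, p!Suc i}"
          by simp_all
        have B: "{p!i, p!Suc i} \<noteq> {v1,u1}" using A(2) by (metis insertCI)
        have C: "{p!i, p!Suc i} \<noteq> {v2,u2}" using A(3) by (metis insertCI)
        show "{p!i, p!Suc i} \<in> E - {{v1,u1}} - {{v2,u2}}" using A(1) B C by simp
      qed
      from walk_conn[OF this] show ?thesis using n k by simp
    qed
    have nb1: "\<not> conn (E - {{v1,u1}}) v1 u1" using br e1 unfolding bridges_def by blast
    have nb2: "\<not> conn (E - {{v2,u2}}) v2 u2" using br e2 unfolding bridges_def by blast
    have c2a: "conn (E - {{v1,u1}}) v1 u2" by (rule conn_mono[OF _ c2]) auto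
    have c2b: "conn (E - {{v2,u2}}) v1 u2" by (rule conn_mono[OF _ c2]) auto
    define E1 where "E1 = E - {{v2,u2}} \<union> {{v1,v2}}"
    have nc1: "\<not> conn (E - {{v2,u2}}) v1 v2"
    proof
      assume h: "conn (E - {{v2,u2}}) v1 v2"
      have "conn (E - {{v2,u2}}) v2 u2" using conn_trans[OF conn_sym[OF h] c2b] .
      then show False using nb2 by simp
    qed
    have T1: "is_tree V E1" unfolding E1_def by (rule swap_tree[OF T e2 V1(1) V2(1) nc1])
    have e1E1: "{v1,u1} \<in> E1" using e1 v1v2 False unfolding E1_def by (auto simp: doubleton_eq_iff)
    have E1e: "E1 - {{v1,u1}} = (E - {{v1,u1}} - {{v2,u2}}) \<union> {{v1,v2}}"
      unfolding E1_def using u1v2 by (auto simp: doubleton_eq_iff)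
    have nc2: "\<not> conn (E1 - {{v1,u1}}) u1 u2"
    proof
      assume h: "conn (E1 - {{v1,u1}}) u1 u2"
      let ?H = "E - {{v1,u1}} - {{v2,u2}}"
      have H: "?H \<subseteq> E - {{v1,u1}}" by auto
      from conn_add[OF h[unfolded E1e]] show False
      proof (elim disjE conjE)
        assume "conn ?H u1 u2"
        then have "conn (E - {{v1,u1}}) u1 u2" by (rule conn_mono[OF H])
        then have "conn (E - {{v1,u1}}) u1 v1" using conn_trans[OF _ conn_sym[OF c2a]] by blast
        then show False using nb1 conn_sym[of u1 v1 "E - {{v1,u1}}"] by simp
      next
        assume "conn ?H u1 v1"
        then have "conn (E - {{v1,u1}}) u1 v1" by (rule conn_mono[OF H])
        then show False using nb1 conn_sym[of u1 v1 "E - {{v1,u1}}"] by simp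
      next
        assume "conn ?H u1 v2"
        then have "conn (E - {{v1,u1}}) u1 v2" by (rule conn_mono[OF H])
        then have "conn (E - {{v1,u1}}) u1 v1" using conn_trans[OF _ conn_sym[OF c1]] by blast
        then show False using nb1 conn_sym[of u1 v1 "E - {{v1,u1}}"] by simp
      qed
    qed
    have E'eq: "E' = E1 - {{v1,u1}} \<union> {{u1,u2}}"
      unfolding E1e E'_def by auto
    have T': "is_tree V E'" unfolding E'eq by (rule swap_tree[OF T1 e1E1 V1(2) V2(2) nc2])
    have n1: "{v1,v2} \<notin> E"
    proof
      assume h: "{v1,v2} \<in> E"
      have "simple_path V E [v1,v2] v1 v2" using h V1 V2 v1v2 by (auto simp: simple_path_def less_Suc_eq)
      then have "p = [v1,v2]" using ex1 p by blast
      then show False using pu2 False V2(3) by auto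
    qed
    have n2: "{u1,u2} \<notin> E"
    proof
      assume h: "{u1,u2} \<in> E"
      have "{u1,u2} \<in> E - {{v1,u1}}" using h False u1u2 by (auto simp: doubleton_eq_iff)
      then have "conn (E - {{v1,u1}}) u1 u2" by (rule conn_edge)
      then have "conn (E - {{v1,u1}}) u1 v1" using conn_trans[OF _ conn_sym[OF c2a]] by blast
      then show False using nb1 conn_sym[of u1 v1 "E - {{v1,u1}}"] by simp
    qed
    have finV: "finite V" using g by (simp add: graph_on_def)
    have finE: "finite E"
    proof (rule finite_subset[of E "Pow V"])
      show "E \<subseteq> Pow V"
      proof
        fix e assume "e \<in> E"
        then obtain u v where "e = {u,v}" "u \<in> V" "v \<in> V" using g unfolding graph_on_def by meson
        then show "e \<in> Pow V" by auto
      qed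
      show "finite (Pow V)" using finV by simp
    qed
    have e12: "{v1,u1} \<noteq> {v2,u2}" using v1v2 False by (auto simp: doubleton_eq_iff)
    have n12: "{v1,v2} \<noteq> {u1,u2}" using V1(3) False by (auto simp: doubleton_eq_iff)
    have degeq: "deg E' z = deg E z" for z
    proof -
      let ?S = "{e \<in> E. z \<in> e}"
      have finS: "finite ?S" using finE by simp
      have Ea: "E' = (E - {{v1,u1},{v2,u2}}) \<union> {{v1,v2},{u1,u2}}" unfolding E'_def ..
      have Eb: "E' = (E - {{v1,u1},{v2,u2}}) \<union> {{u1,u2},{v1,v2}}" unfolding E'_def by (simp add: insert_commute)
      have Ec: "E' = (E - {{v2,u2},{v1,u1}}) \<union> {{v1,v2},{u1,u2}}" unfolding E'_def by (simp add: insert_commute)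
      have Ed: "E' = (E - {{v2,u2},{v1,u1}}) \<union> {{u1,u2},{v1,v2}}" unfolding E'_def by (simp add: insert_commute)
      consider "z = v1" | "z = u1" | "z = v2" | "z = u2" | "z \<notin> {v1,u1,v2,u2}" by blast
      then show ?thesis
      proof cases
        case 1
        have "{e \<in> E'. z \<in> e} = ?S - {{v1,u1}} \<union> {{v1,v2}}"
          unfolding Ea by (rule degset) (use 1 v1v2 False V1(3) in auto)
        then show ?thesis unfolding deg_def using card_swap[OF finS] 1 e1 n1 by simp
      next
        case 2
        have "{e \<in> E'. z \<in> e} = ?S - {{v1,u1}} \<union> {{u1,u2}}"
          unfolding Eb by (rule degset) (use 2 u1v2 u1u2 V1(3) in auto)
        then show ?thesis unfolding deg_def using card_swap[OF finS] 2 e1 n2 by simp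
      next
        case 3
        have "{e \<in> E'. z \<in> e} = ?S - {{v2,u2}} \<union> {{v1,v2}}"
          unfolding Ec by (rule degset) (use 3 v1v2 u1v2 V2(3) in auto)
        then show ?thesis unfolding deg_def using card_swap[OF finS] 3 e2 n1 by simp
      next
        case 4
        have "{e \<in> E'. z \<in> e} = ?S - {{v2,u2}} \<union> {{u1,u2}}"
          unfolding Ed by (rule degset) (use 4 False u1u2 V2(3) in auto)
        then show ?thesis unfolding deg_def using card_swap[OF finS] 4 e2 n2 by simp
      next
        case 5
        have "{e \<in> E'. z \<in> e} = ?S" using 5 unfolding E'_def by auto
        then show ?thesis unfolding deg_def by simp
      qed
    qed
    have degf: "deg E' = deg E" using degeq by (rule ext)
    have bd: "boundary V E' = boundary V E" unfolding boundary_def degf ..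
    have it: "interior V E' = interior V E" unfolding interior_def degf ..
    have TB: "tree_with_boundary V E'"
      using G T' bd it unfolding tree_with_boundary_def by simp
    have DS: "degree_sequence V E' = degree_sequence V E" unfolding degree_sequence_def degf ..
    let ?S0 = "E - {{v1,u1},{v2,u2}}"
    have finS0: "finite ?S0" using finE by simp
    have Eeq: "E = insert {v1,u1} (insert {v2,u2} ?S0)" using e1 e2 by auto
    have E'eq2: "E' = insert {v1,v2} (insert {u1,u2} ?S0)" unfolding E'_def by auto
    have sumE: "(\<Sum>e\<in>E. edge_sq f e) = edge_sq f {v1,u1} + edge_sq f {v2,u2} + (\<Sum>e\<in>?S0. edge_sq f e)" for f
    proof -
      have "(\<Sum>e\<in>E. edge_sq f e) = (\<Sum>e\<in>insert {v1,u1} (insert {v2,u2} ?S0). edge_sq f e)"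
        using Eeq by simp
      also have "\<dots> = edge_sq f {v1,u1} + (edge_sq f {v2,u2} + (\<Sum>e\<in>?S0. edge_sq f e))"
        using finS0 e12 by simp
      finally show ?thesis by simp
    qed
    have sumE': "(\<Sum>e\<in>E'. edge_sq f e) = edge_sq f {v1,v2} + edge_sq f {u1,u2} + (\<Sum>e\<in>?S0. edge_sq f e)" for f
    proof -
      have "(\<Sum>e\<in>E'. edge_sq f e) = (\<Sum>e\<in>insert {v1,v2} (insert {u1,u2} ?S0). edge_sq f e)"
        using E'eq2 by simp
      also have "\<dots> = edge_sq f {v1,v2} + (edge_sq f {u1,u2} + (\<Sum>e\<in>?S0. edge_sq f e))"
        using finS0 n12 n1 n2 by simp
      finally show ?thesis by simp
    qed
    have RQ: "rayleigh V E' f \<le> rayleigh V E f \<and>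
              (f v1 > f u2 \<and> f v2 > f u1 \<longrightarrow> rayleigh V E' f < rayleigh V E f)"
      if hf: "\<exists>v\<in>V. f v \<noteq> 0" "f v1 \<ge> f u2" "f v2 \<ge> f u1" for f :: "'a \<Rightarrow> real"
    proof -
      obtain w where w: "w \<in> V" "f w \<noteq> 0" using hf(1) by blast
      have "0 < (f w)^2" using w by simp
      also have "(f w)^2 \<le> (\<Sum>v\<in>V. (f v)^2)" using member_le_sum[of w V "\<lambda>v. (f v)^2"] w(1) finV by simp
      finally have D: "0 < (\<Sum>v\<in>V. (f v)^2)" .
      define N where "N = (\<Sum>e\<in>E. edge_sq f e)"
      define N' where "N' = (\<Sum>e\<in>E'. edge_sq f e)"
      have NN: "N' = N + 2 * ((f u1 - f v2) * (f v1 - f u2))"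
        unfolding N_def N'_def sumE sumE' edge_sq_eq by (simp add: power2_eq_square algebra_simps)
      have le: "(f u1 - f v2) * (f v1 - f u2) \<le> 0"
        using hf by (simp add: mult_nonpos_nonneg)
      have R: "rayleigh V E' f = N' / (\<Sum>v\<in>V. (f v)^2)" "rayleigh V E f = N / (\<Sum>v\<in>V. (f v)^2)"
        unfolding rayleigh_def N_def N'_def by simp_all
      have "N' \<le> N" using NN le by simp
      then have A: "rayleigh V E' f \<le> rayleigh V E f" unfolding R using D by (simp add: divide_right_mono)
      have B: "rayleigh V E' f < rayleigh V E f" if s: "f v1 > f u2" "f v2 > f u1"
      proof -
        have "(f u1 - f v2) * (f v1 - f u2) < 0" using s by (simp add: mult_neg_pos)
        then have "N' < N" using NN by simp
        then show ?thesis unfolding R using D by (simp add: divide_strict_right_mono)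
      qed
      show ?thesis using A B by blast
    qed
    show ?thesis using TB DS bd RQ by blast
  qed
qed

end
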